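(* Let $X$ be a real normed space, $\mathcal M=\{M_1,\dots,M_n\}\subset\mathcal P^f_{\mathrm{Cl,Conv}}(X)$, $\Sigma(\mathcal M)\neq\emptyset$ and $d=(d_1,\dots,d_n)\in\Omega(\mathcal M)$. Suppose there is an index $s$ such that every nonempty set of the form $B_r(M_s)\cap K_d$ ($0\le r<\infty$) lies in the same finiteness class as the $M_i$ (i.e. $d_H(B_r(M_s)\cap K_d,M_1)<\infty$). Then there exists $i$ with $d_i=\sup_{x\in M_i}|x\,K_d|$.
   Context: For a metric space $X$, $p\in X$, $A\subset X$: $|p\,A|=\inf_{a\in A}|p\,a|$ ($=\infty$ if $A=\emptyset$); for $0\le r<\infty$, $B_r(A)=\{p:|p\,A|\le r\}$. For nonempty $A,B$, $d_H(A,B)=\max\{\sup_{a\in A}|a\,B|,\sup_{b\in B}|b\,A|\}\in[0,\infty]$. $\mathcal P_{\mathrm{Cl}}(X)$ is the set of nonempty closed subsets of $X$ with $d_H$; a finiteness class is an equivalence class of $A\sim B\iff d_H(A,B)<\infty$. $\mathcal P^f_{\mathrm{Cl,Conv}}(X)$ denotes a fixed finiteness class of the space of nonempty closed convex subsets of $X$ (a family of nonempty closed convex sets pairwise at finite Hausdorff distance, maximal with this property); let $\mathcal P^f_{\mathrm{Cl}}(X)$ be the finiteness class of $\mathcal P_{\mathrm{Cl}}(X)$ containing it. For $\mathcal M=\{M_1,\dots,M_n\}$ in it, $S_{\mathcal M}(Y)=\sum_i d_H(Y,M_i)$; $\Sigma(\mathcal M)$ is the set of minimizers of $S_{\mathcal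 M}$ over $\mathcal P^f_{\mathrm{Cl}}(X)$; for $K\in\Sigma(\mathcal M)$, $d(K)=(d_H(K,M_1),\dots,d_H(K,M_n))$; $\Omega(\mathcal M)=\{d(K):K\in\Sigma(\mathcal M)\}$; for $d\in\Omega(\mathcal M)$, $\Sigma_d(\mathcal M)=\{K\in\Sigma(\mathcal M):d(K)=d\}$ and $K_d=\bigcap_{i=1}^nB_{d_i}(M_i)$. *)

theory Defs
  imports "HOL-Analysis.Analysis"
begin

definition pdist :: "'a::metric_space \<Rightarrow> 'a set \<Rightarrow> ereal" where
  "pdist p A = (if A = {} then \<infinity> else ereal (infdist p A))"

definition nbhd :: "real \<Rightarrow> 'a::metric_space set \<Rightarrow> 'a set" where
  "nbhd r A = {p. pdist p A \<le> ereal r}"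

definition dH :: "'a::metric_space set \<Rightarrow> 'a set \<Rightarrow> ereal" where
  "dH A B = max (SUP a\<in>A. pdist a B) (SUP b\<in>B. pdist b A)"

definition fin_class :: "(nat \<Rightarrow> 'a::metric_space set) \<Rightarrow> 'a set set" where
  "fin_class M = {Y. Y \<noteq> {} \<and> closed Y \<and> dH Y (M 0) < \<infinity>}"

definition S_M :: "nat \<Rightarrow> (nat \<Rightarrow> 'a::metric_space set) \<Rightarrow> 'a set \<Rightarrow> ereal" where
  "S_M n M Y = (\<Sum>i<n. dH Y (M i))"

definition Sigma_M :: "nat \<Rightarrow> (nat \<Rightarrow> 'a::metric_space set) \<Rightarrow> 'a set set" where
  "Sigma_M n M = {K \<in> fin_class M. \<forall>Y\<in>fin_class M. S_M n M K \<le> S_M n M Y}"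

definition Omega_M :: "nat \<Rightarrow> (nat \<Rightarrow> 'a::metric_space set) \<Rightarrow> (nat \<Rightarrow> real) set" where
  "Omega_M n M = {d. \<exists>K\<in>Sigma_M n M. \<forall>i<n. ereal (d i) = dH K (M i)}"

definition K_d :: "nat \<Rightarrow> (nat \<Rightarrow> 'a::metric_space set) \<Rightarrow> (nat \<Rightarrow> real) \<Rightarrow> 'a set" where
  "K_d n M d = (\<Inter>i<n. nbhd (d i) (M i))"

end

theory Submission
  imports Defs
begin

lemma pdist_ne: "A \<noteq> {} \<Longrightarrow> pdist p A = ereal (infdist p A)"
  by (simp add: pdist_def)

lemma nbhd_ne: "A \<noteq> {} \<Longrightarrow> nbhd r A = {p. infdist p A \<le> r}"
  by (simp add: nbhd_def pdist_ne)

lemma dH_le: "A \<noteq> {} \<Longrightarrow> B \<noteq> {} \<Longrightarrow>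
   dH A B \<le> ereal c \<longleftrightarrow> (\<forall>a\<in>A. infdist a B \<le> c) \<and> (\<forall>b\<in>B. infdist b A \<le> c)"
  unfolding dH_def by (simp add: pdist_ne SUP_le_iff)

lemma infdist_lessE: "A \<noteq> {} \<Longrightarrow> infdist x A < t \<Longrightarrow> \<exists>a\<in>A. dist x a < t"
  by (simp add: infdist_notempty cINF_less_iff)

lemma infdist_convex:
  fixes A :: "'a::real_normed_vector set"
  assumes A: "convex A" "A \<noteq> {}" and l: "0 \<le> l" "l \<le> 1"
  shows "infdist ((1 - l) *\<^sub>R x + l *\<^sub>R y) A \<le> (1 - l) * infdist x A + l * infdist y A"
proof (rule field_le_epsilon)
  fix e :: real assume e: "0 < e"
  obtain a where a: "a \<in> A" "dist x a < infdist x A + e"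
    using infdist_lessE[OF A(2), of x "infdist x A + e"] e by auto
  obtain b where b: "b \<in> A" "dist y b < infdist y A + e"
    using infdist_lessE[OF A(2), of y "infdist y A + e"] e by auto
  have z: "(1 - l) *\<^sub>R a + l *\<^sub>R b \<in> A"
    using A(1) a(1) b(1) l by (simp add: convex_def)
  have "dist ((1 - l) *\<^sub>R x + l *\<^sub>R y) ((1 - l) *\<^sub>R a + l *\<^sub>R b)
      = norm ((1 - l) *\<^sub>R (x - a) + l *\<^sub>R (y - b))"
    by (simp add: dist_norm algebra_simps)
  also have "\<dots> \<le> (1 - l) * dist x a + l * dist y b"
    using l by (metis (no_types, lifting) abs_of_nonneg diff_ge_0_iff_ge dist_norm norm_scaleR norm_triangle_ineq)
  also have "\<dots> \<le> (1 - l) * (infdist x A + e) + l * (infdist y A + e)"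
    using a b l by (intro add_mono mult_left_mono) auto
  also have "\<dots> = (1 - l) * infdist x A + l * infdist y A + e"
    by (simp add: algebra_simps)
  finally show "infdist ((1 - l) *\<^sub>R x + l *\<^sub>R y) A \<le> (1 - l) * infdist x A + l * infdist y A + e"
    using infdist_le[OF z, of "(1 - l) *\<^sub>R x + l *\<^sub>R y"] by linarith
qed

lemma convex_sublevel_infdist:
  fixes A :: "'a::real_normed_vector set"
  assumes "convex A" "A \<noteq> {}"
  shows "convex {p. infdist p A \<le> r}"
proof (rule convexI)
  fix x y and u v :: real assume h: "x \<in> {p. infdist p A \<le> r}" "y \<in> {p. infdist p A \<le> r}"
     "0 \<le> u" "0 \<le> v" "u + v = 1"
  then have "v \<le> 1" "u = 1 - v" by auto
  have "infdist ((1 - v) *\<^sub>R x + v *\<^sub>R y) A \<le> (1 - v) * infdist x A + v * infdist y A"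
    by (rule infdist_convex) (use assms h \<open>v \<le> 1\<close> in auto)
  also have "\<dots> \<le> (1 - v) * r + v * r"
    using h \<open>v \<le> 1\<close> by (intro add_mono mult_left_mono) auto
  also have "\<dots> = r" by (simp add: algebra_simps)
  finally show "u *\<^sub>R x + v *\<^sub>R y \<in> {p. infdist p A \<le> r}"
    using \<open>u = 1 - v\<close> by simp
qed

theorem mainTheorem14:
  fixes M :: "nat \<Rightarrow> 'a::real_normed_vector set" and n :: nat and d :: "nat \<Rightarrow> real"
  assumes "0 < n"
    and "\<forall>i<n. M i \<noteq> {} \<and> closed (M i) \<and> convex (M i)"
    and "\<forall>i<n. \<forall>j<n. dH (M i) (M j) < \<infinity>"
    and "Sigma_M n M \<noteq> {}"
    and "d \<in> Omega_M n M"
    and "\<exists>s<n. \<forall>r\<ge>0. nbhd r (M s) \<inter> K_d n M d \<noteq> {} \<longrightarrow>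
                  dH (nbhd r (M s) \<inter> K_d n M d) (M 0) < \<infinity>"
  shows "\<exists>i<n. ereal (d i) = (SUP x\<in>M i. pdist x (K_d n M d))"
proof -
  obtain s where s: "s < n" and hs: "\<forall>r\<ge>0. nbhd r (M s) \<inter> K_d n M d \<noteq> {} \<longrightarrow>
                  dH (nbhd r (M s) \<inter> K_d n M d) (M 0) < \<infinity>"
    using assms(6) by blast
  have Mi: "\<And>i. i<n \<Longrightarrow> M i \<noteq> {} \<and> closed (M i) \<and> convex (M i)" using assms(2) by blast
  obtain K where K: "K \<in> Sigma_M n M" and dK: "\<And>i. i<n \<Longrightarrow> ereal (d i) = dH K (M i)"
    using assms(5) unfolding Omega_M_def by blast
  have Kne: "K \<noteq> {}" "closed K" using K unfolding Sigma_M_def fin_class_def by auto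
  have Kmin: "\<And>Y. Y \<in> fin_class M \<Longrightarrow> S_M n M K \<le> S_M n M Y"
    using K unfolding Sigma_M_def by auto
  have Kb: "(\<forall>a\<in>K. infdist a (M i) \<le> d i) \<and> (\<forall>b\<in>M i. infdist b K \<le> d i)" if i: "i<n" for i
  proof -
    have "dH K (M i) \<le> ereal (d i)" using dK[OF i] by simp
    then show ?thesis using dH_le[OF Kne(1)] Mi[OF i] by blast
  qed
  define Kd where "Kd = K_d n M d"
  have Kd_eq: "Kd = (\<Inter>i\<in>{..<n}. {x. infdist x (M i) \<le> d i})"
    unfolding Kd_def K_d_def using Mi by (auto simp: nbhd_ne)
  have Kdin: "\<And>i x. i<n \<Longrightarrow> x \<in> Kd \<Longrightarrow> infdist x (M i) \<le> d i" using Kd_eq by auto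
  have KKd: "K \<subseteq> Kd" using Kb Kd_eq by auto
  have Kdne: "Kd \<noteq> {}" using KKd Kne by auto
  have Kdconv: "convex Kd" unfolding Kd_eq
    by (rule convex_INT) (use Mi convex_sublevel_infdist in auto)
  have Kdcl: "closed Kd" unfolding Kd_eq
    by (intro closed_INT ballI closed_Collect_le continuous_on_infdist continuous_on_id continuous_on_const)
  have SK: "S_M n M K = ereal (\<Sum>i<n. d i)"
  proof -
    have "S_M n M K = (\<Sum>i<n. ereal (d i))" unfolding S_M_def by (rule sum.cong) (auto simp: dK)
    then show ?thesis by simp
  qed
  show ?thesis
  proof (rule ccontr)
    assume na: "\<not> ?thesis"
    have "\<forall>i<n. \<exists>c. c < d i \<and> (\<forall>m\<in>M i. infdist m Kd \<le> c)"
    proof (intro allI impI)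
      fix i assume i: "i<n"
      have le: "(SUP x\<in>M i. pdist x Kd) \<le> ereal (d i)"
      proof (rule SUP_least)
        fix m assume m: "m \<in> M i"
        have "infdist m Kd \<le> infdist m K" by (rule infdist_mono[OF KKd Kne(1)])
        also have "\<dots> \<le> d i" using Kb[OF i] m by auto
        finally show "pdist m Kd \<le> ereal (d i)" using Kdne by (simp add: pdist_ne)
      qed
      have "(SUP x\<in>M i. pdist x Kd) \<noteq> ereal (d i)" using na i unfolding Kd_def by auto
      with le have "(SUP x\<in>M i. pdist x Kd) < ereal (d i)" by auto
      then obtain z where z: "(SUP x\<in>M i. pdist x Kd) < ereal z" "ereal z < ereal (d i)"
        by (meson ereal_dense2)
      have "\<forall>m\<in>M i. infdist m Kd \<le> z"
      proof
        fix m assume "m \<in> M i"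
        then have "pdist m Kd \<le> (SUP x\<in>M i. pdist x Kd)" by (rule SUP_upper)
        with z(1) have "pdist m Kd < ereal z" by order
        then have "ereal (infdist m Kd) < ereal z" using Kdne by (simp add: pdist_ne)
        then show "infdist m Kd \<le> z" by simp
      qed
      then show "\<exists>c. c < d i \<and> (\<forall>m\<in>M i. infdist m Kd \<le> c)" using z(2) by auto
    qed
    then obtain c where c: "\<And>i. i<n \<Longrightarrow> c i < d i" "\<And>i m. i<n \<Longrightarrow> m \<in> M i \<Longrightarrow> infdist m Kd \<le> c i"
      by metis
    define g where "g = Min ((\<lambda>i. d i - c i) ` {..<n})"
    have g0: "0 < g" unfolding g_def using assms(1) c(1) by (subst Min_gr_iff) auto
    have gle: "\<And>i. i<n \<Longrightarrow> g \<le> d i - c i" unfolding g_def by (rule Min_le) auto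
    define e where "e = g/4"
    have e0: "0 < e" using g0 e_def by simp
    have ele: "\<And>i. i<n \<Longrightarrow> c i + 4*e \<le> d i" using gle e_def by fastforce
    obtain m0 where m0: "m0 \<in> M s" using Mi s by blast
    have cs0: "0 \<le> c s" using c(2)[OF s m0] infdist_nonneg order_trans by blast
    define D where "D = 2 * d s + 2 * e + 1"
    have D0: "0 < D" using cs0 c(1)[OF s] e0 D_def by simp
    define l where "l = min 1 (e / D)"
    have l0: "0 < l" "l \<le> 1" using e0 D0 l_def by auto
    have lD: "l * D \<le> e"
    proof -
      have "l * D \<le> (e / D) * D" using D0 l_def by (intro mult_right_mono) auto
      then show ?thesis using D0 by simp
    qed
    define r where "r = (1-l)*d s + l*(c s + e)"
    have r0: "0 \<le> r" unfolding r_def using l0 cs0 e0 c(1)[OF s]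
      by (intro add_nonneg_nonneg mult_nonneg_nonneg) auto
    have rlt: "r < d s"
    proof -
      have "r = d s - l * (d s - c s - e)" unfolding r_def by algebra
      moreover have "0 < l * (d s - c s - e)" using l0 ele[OF s] e0 by simp
      ultimately show ?thesis by linarith
    qed
    define Y where "Y = nbhd r (M s) \<inter> Kd"
    have Y_eq: "Y = Kd \<inter> {y. infdist y (M s) \<le> r}" unfolding Y_def using Mi[OF s] by (auto simp: nbhd_ne)
    have near: "\<exists>y\<in>Y. dist m y \<le> c i + 2*e" if i: "i<n" and m: "m \<in> M i" for i m
    proof -
      obtain k where k: "k \<in> Kd" "dist m k < c i + e"
        using infdist_lessE[OF Kdne, of m "c i + e"] c(2)[OF i m] e0 by auto
      obtain p where p: "p \<in> M s" "dist k p < d s + e"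
        using infdist_lessE[of "M s" k "d s + e"] Mi[OF s] Kdin[OF s k(1)] e0 by auto
      obtain q where q: "q \<in> Kd" "dist p q < c s + e"
        using infdist_lessE[OF Kdne, of p "c s + e"] c(2)[OF s p(1)] e0 by auto
      have kq: "dist k q \<le> D"
        using dist_triangle[of k q p] p q c(1)[OF s] D_def by linarith
      define y where "y = (1-l) *\<^sub>R k + l *\<^sub>R q"
      have yKd: "y \<in> Kd" using Kdconv k(1) q(1) l0 by (simp add: convex_def y_def)
      have iq: "infdist q (M s) \<le> c s + e" using infdist_le[OF p(1), of q] q by (simp add: dist_commute)
      have "infdist y (M s) \<le> (1-l) * infdist k (M s) + l * infdist q (M s)"
        unfolding y_def by (rule infdist_convex) (use Mi[OF s] l0 in auto)
      also have "\<dots> \<le> r" unfolding r_def using Kdin[OF s k(1)] iq l0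
        by (intro add_mono mult_left_mono) auto
      finally have yY: "y \<in> Y" using yKd Y_eq by auto
      have "dist k y = norm (l *\<^sub>R (k - q))" by (simp add: y_def dist_norm algebra_simps)
      also have "\<dots> = l * dist k q" using l0 by (simp add: dist_norm)
      also have "\<dots> \<le> l * D" using l0 kq by (intro mult_left_mono) auto
      finally have "dist k y \<le> e" using lD by linarith
      then have "dist m y \<le> c i + 2*e" using dist_triangle[of m y k] k(2) by linarith
      then show ?thesis using yY by blast
    qed
    have Yne: "Y \<noteq> {}" using near[OF s m0] by auto
    have Ycl: "closed Y" unfolding Y_eq
      by (intro closed_Int Kdcl closed_Collect_le continuous_on_infdist continuous_on_id continuous_on_const)
    have Yfin: "Y \<in> fin_class M" unfolding fin_class_def using hs r0 Yne Ycl unfolding Y_def Kd_def by auto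
    define \<delta> where "\<delta> = d s - max r (c s + 2*e)"
    have \<delta>0: "0 < \<delta>" unfolding \<delta>_def using rlt ele[OF s] e0 by auto
    have YM: "dH Y (M i) \<le> ereal (d i - (if i = s then \<delta> else 0))" if i: "i<n" for i
    proof -
      have A: "\<forall>a\<in>Y. infdist a (M i) \<le> d i - (if i = s then \<delta> else 0)"
      proof
        fix a assume "a \<in> Y"
        then have "a \<in> Kd" "infdist a (M s) \<le> r" using Y_eq by auto
        then show "infdist a (M i) \<le> d i - (if i = s then \<delta> else 0)"
          using Kdin[OF i] \<delta>_def by auto
      qed
      have B: "\<forall>b\<in>M i. infdist b Y \<le> d i - (if i = s then \<delta> else 0)"
      proof
        fix b assume b: "b \<in> M i"
        obtain y where y: "y \<in> Y" "dist b y \<le> c i + 2*e" using near[OF i b] by blast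
        have "infdist b Y \<le> c i + 2*e" using infdist_le[OF y(1), of b] y(2) by linarith
        then show "infdist b Y \<le> d i - (if i = s then \<delta> else 0)"
          using ele[OF i] e0 \<delta>_def by auto
      qed
      show ?thesis using dH_le[OF Yne] Mi[OF i] A B by blast
    qed
    have "S_M n M Y \<le> (\<Sum>i<n. ereal (d i - (if i = s then \<delta> else 0)))"
      unfolding S_M_def by (rule sum_mono) (use YM in auto)
    also have "\<dots> = ereal ((\<Sum>i<n. d i) - \<delta>)"
      using s by (simp add: sum_subtractf)
    also have "\<dots> < ereal (\<Sum>i<n. d i)" using \<delta>0 by simp
    finally have "S_M n M Y < S_M n M K" using SK by simp
    with Kmin[OF Yfin] show False by simp
  qed
qed

end
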